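(* Let $\epsilon\in(0,1/3)$ and let $A\in\mathbb{C}^{\ell\times\ell}$ be a matrix with nonnegative entries such that $A_{0,0}=1-\epsilon$ and $\sum_{i,j}A_{i,j}=1$. Then $A$ has a unique eigenvalue $\mu$ (of algebraic multiplicity one) satisfying $$|\mu-A_{0,0}|\le\frac{\epsilon^2}{1-2\epsilon},$$ and every other eigenvalue $\lambda$ of $A$ satisfies $|\lambda|\le\epsilon$. In particular, $\mu$ is the unique eigenvalue of maximal modulus and $\mu=A_{0,0}+O(\epsilon^2)$.
   Context: Rows and columns of $A$ are indexed by $0,\dots,\ell-1$. *)

theory Defs
  imports "Jordan_Normal_Form.Char_Poly"
begin

end

theory Submission imports Defs "Jordan_Normal_Form.Spectral_Radius" "Jordan_Normal_Form.Jordan_Normal_Form_Uniqueness" begin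

hide_const (open) Coset.order


lemma cmod_realnn: "z \<in> \<real> \<Longrightarrow> 0 \<le> Re z \<Longrightarrow> cmod z = Re z"
  by (simp add: complex_is_Real_iff cmod_eq_Re)

lemma eig_row:
  fixes A :: "complex mat"
  assumes A: "A \<in> carrier_mat l l" and v: "v \<in> carrier_vec l"
    and e: "A *\<^sub>v v = lam \<cdot>\<^sub>v v" and i: "i < l"
  shows "(\<Sum>j\<in>{0..<l}. A $$ (i,j) * v $ j) = lam * v $ i"
proof -
  have "(A *\<^sub>v v) $ i = (lam \<cdot>\<^sub>v v) $ i" using e by simp
  thus ?thesis using A v i by (simp add: scalar_prod_def)
qed

lemma tail_bound:
  fixes M :: "complex mat"
  assumes nn: "\<forall>i<l. \<forall>j<l. M$$(i,j) \<in> \<real> \<and> 0 \<le> Re (M$$(i,j))"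
    and ev: "\<forall>i<l. (\<Sum>j\<in>{0..<l}. M$$(i,j) * v$j) = lam * v$i"
    and l: "0<l"
  shows "cmod lam * (\<Sum>i\<in>{1..<l}. cmod (v$i)) \<le> (\<Sum>i\<in>{1..<l}. Re (M$$(i,0))) * cmod (v$0)
     + (\<Sum>i\<in>{1..<l}. \<Sum>j\<in>{1..<l}. Re (M$$(i,j))) * (\<Sum>i\<in>{1..<l}. cmod (v$i))"
proof -
  have split: "{0..<l} = insert 0 {1..<l}" using l by auto
  have row: "cmod lam * cmod (v$i) \<le> Re (M$$(i,0)) * cmod (v$0) + (\<Sum>j\<in>{1..<l}. Re (M$$(i,j)) * cmod (v$j))"
    if i: "i\<in>{1..<l}" for i
  proof -
    have "lam * v$i = M$$(i,0) * v$0 + (\<Sum>j\<in>{1..<l}. M$$(i,j) * v$j)"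
      using ev[rule_format, of i] i by (simp add: split)
    hence "cmod lam * cmod (v$i) = cmod (M$$(i,0) * v$0 + (\<Sum>j\<in>{1..<l}. M$$(i,j) * v$j))"
      by (metis norm_mult)
    also have "\<dots> \<le> cmod (M$$(i,0) * v$0) + cmod (\<Sum>j\<in>{1..<l}. M$$(i,j) * v$j)"
      by (rule norm_triangle_ineq)
    also have "cmod (\<Sum>j\<in>{1..<l}. M$$(i,j) * v$j) \<le> (\<Sum>j\<in>{1..<l}. cmod (M$$(i,j) * v$j))"
      by (rule norm_sum)
    also have "(\<Sum>j\<in>{1..<l}. cmod (M$$(i,j) * v$j)) = (\<Sum>j\<in>{1..<l}. Re (M$$(i,j)) * cmod (v$j))"
      using nn i by (intro sum.cong refl) (simp add: norm_mult cmod_realnn)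
    also have "cmod (M$$(i,0) * v$0) = Re (M$$(i,0)) * cmod (v$0)"
      using nn i l by (simp add: norm_mult cmod_realnn)
    finally show ?thesis by simp
  qed
  define s where "s = (\<Sum>i\<in>{1..<l}. \<Sum>j\<in>{1..<l}. Re (M$$(i,j)))"
  have col: "(\<Sum>i\<in>{1..<l}. Re (M$$(i,j))) \<le> s" if j: "j \<in> {1..<l}" for j
    unfolding s_def
  proof (rule sum_mono)
    fix i assume i: "i \<in> {1..<l}"
    show "Re (M$$(i,j)) \<le> (\<Sum>j\<in>{1..<l}. Re (M$$(i,j)))"
      by (rule member_le_sum[OF j]) (use nn i in auto)
  qed
  have "cmod lam * (\<Sum>i\<in>{1..<l}. cmod (v$i)) = (\<Sum>i\<in>{1..<l}. cmod lam * cmod (v$i))"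
    by (simp add: sum_distrib_left)
  also have "\<dots> \<le> (\<Sum>i\<in>{1..<l}. Re (M$$(i,0)) * cmod (v$0) + (\<Sum>j\<in>{1..<l}. Re (M$$(i,j)) * cmod (v$j)))"
    by (rule sum_mono, rule row)
  also have "\<dots> = (\<Sum>i\<in>{1..<l}. Re (M$$(i,0))) * cmod (v$0) + (\<Sum>j\<in>{1..<l}. (\<Sum>i\<in>{1..<l}. Re (M$$(i,j))) * cmod (v$j))"
    by (simp add: sum.distrib sum_distrib_right, rule sum.swap)
  also have "(\<Sum>j\<in>{1..<l}. (\<Sum>i\<in>{1..<l}. Re (M$$(i,j))) * cmod (v$j)) \<le> (\<Sum>j\<in>{1..<l}. s * cmod (v$j))"
    by (rule sum_mono, rule mult_right_mono[OF col], auto)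
  finally show ?thesis by (simp add: s_def sum_distrib_left)
qed

lemma head_bound:
  fixes M :: "complex mat"
  assumes nn: "\<forall>i<l. \<forall>j<l. M$$(i,j) \<in> \<real> \<and> 0 \<le> Re (M$$(i,j))"
    and ev: "\<forall>i<l. (\<Sum>j\<in>{0..<l}. M$$(i,j) * v$j) = lam * v$i"
    and l: "0<l"
  shows "cmod (lam - M$$(0,0)) * cmod (v$0) \<le> (\<Sum>j\<in>{1..<l}. Re (M$$(0,j))) * (\<Sum>i\<in>{1..<l}. cmod (v$i))"
proof -
  have split: "{0..<l} = insert 0 {1..<l}" using l by auto
  define p where "p = (\<Sum>j\<in>{1..<l}. Re (M$$(0,j)))"
  have "lam * v$0 = M$$(0,0) * v$0 + (\<Sum>j\<in>{1..<l}. M$$(0,j) * v$j)"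
    using ev[rule_format, of 0] l by (simp add: split)
  hence "(lam - M$$(0,0)) * v$0 = (\<Sum>j\<in>{1..<l}. M$$(0,j) * v$j)"
    by (simp add: algebra_simps)
  hence "cmod (lam - M$$(0,0)) * cmod (v$0) = cmod (\<Sum>j\<in>{1..<l}. M$$(0,j) * v$j)"
    by (metis norm_mult)
  also have "\<dots> \<le> (\<Sum>j\<in>{1..<l}. cmod (M$$(0,j) * v$j))" by (rule norm_sum)
  also have "\<dots> = (\<Sum>j\<in>{1..<l}. Re (M$$(0,j)) * cmod (v$j))"
    using nn l by (intro sum.cong refl) (simp add: norm_mult cmod_realnn)
  also have "\<dots> \<le> (\<Sum>j\<in>{1..<l}. p * cmod (v$j))"
  proof (rule sum_mono, rule mult_right_mono)
    fix j assume j: "j \<in> {1..<l}"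
    show "Re (M$$(0,j)) \<le> p" unfolding p_def
      by (rule member_le_sum[OF j]) (use nn l in auto)
  qed auto
  finally show ?thesis by (simp add: p_def sum_distrib_left)
qed

lemma pq4: fixes p q :: real shows "p*q \<le> (p+q)^2/4"
proof -
  have "0 \<le> (p-q)^2" by simp
  thus ?thesis by (simp add: power2_eq_square algebra_simps)
qed
lemma ar1:
  fixes d L p q s e :: real
  assumes p: "0 \<le> p" and q: "0 \<le> q" and s: "0 \<le> s" and sum: "p+q+s = e" and L: "e < L" and L2: "1 - e - d \<le> L" and d: "0 \<le> d"
    and h: "d * (L - s) \<le> p * q" and e0: "0 < e" and e1: "e < 1/3"
  shows "d \<le> e^2 / (1 - 2*e)"
proof -
  have "e - s = p + q" using sum by simp
  hence pq: "p*q \<le> (e-s)^2/4" using pq4[of p q] by simp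
  have es: "0 \<le> e - s" "e - s \<le> L - s" using p q sum L by auto
  have "(e-s)^2 \<le> (e-s)*(L-s)" using es by (simp add: power2_eq_square mult_left_mono)
  hence h2: "d * (L - s) \<le> (e-s)*(L-s)/4" using h pq by linarith
  have Ls: "0 < L - s" using es L by linarith
  have "d * (L - s) \<le> ((e-s)/4)*(L-s)" using h2 by simp
  hence "d \<le> (e-s)/4" using Ls by (simp add: mult_le_cancel_right_pos)
  moreover have "(e-s)/4 \<le> e/4" using s by simp
  ultimately have d4: "d \<le> e/4" by linarith
  have "(e-s)^2 \<le> e^2" using es s by (simp add: power_mono)
  hence h3: "d * (L-s) \<le> e^2/4" using h pq by linarith
  have "L - s \<ge> 1 - 2*e - e/4" using L2 d4 s sum p q by linarith
  hence "d * (1 - 2*e - e/4) \<le> d * (L - s)" using d by (simp add: mult_left_mono)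
  hence h4: "d * (1 - 2*e - e/4) \<le> e^2/4" using h3 by linarith
  have pos: "0 < 1 - 2*e" using e1 by simp
  have "0 \<le> d * (3 - 7*e)" using d e1 by simp
  hence "d * (1 - 2*e) \<le> 4 * (d * (1 - 2*e - e/4))" by (simp add: algebra_simps)
  hence "d * (1 - 2*e) \<le> e^2" using h4 by linarith
  thus ?thesis using pos by (simp add: field_simps)
qed

lemma pow_nonneg:
  fixes M :: "complex mat"
  assumes M: "M \<in> carrier_mat l l" and nn: "\<forall>i<l. \<forall>j<l. Im (M$$(i,j)) = 0 \<and> 0 \<le> Re (M$$(i,j))"
    and l: "0 < l"
  shows "(\<forall>i<l. \<forall>j<l. Im ((M ^\<^sub>m k)$$(i,j)) = 0 \<and> 0 \<le> Re ((M ^\<^sub>m k)$$(i,j)))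
     \<and> Re (M$$(0,0)) ^ k \<le> Re ((M ^\<^sub>m k)$$(0,0))"
proof (induction k)
  case 0
  then show ?case using M l by auto
next
  case (Suc k)
  define X where "X = M ^\<^sub>m k"
  have X: "X \<in> carrier_mat l l" unfolding X_def using M by auto
  have ent: "(M ^\<^sub>m Suc k)$$(i,j) = (\<Sum>t\<in>{0..<l}. X$$(i,t) * M$$(t,j))" if "i<l" "j<l" for i j
    using that X M by (simp add: X_def[symmetric] scalar_prod_def)
  have IH1: "\<forall>i<l. \<forall>j<l. Im (X$$(i,j)) = 0 \<and> 0 \<le> Re (X$$(i,j))" using Suc.IH unfolding X_def by blast
  have IH2: "Re (M$$(0,0)) ^ k \<le> Re (X$$(0,0))" using Suc.IH unfolding X_def by blast
  have P1: "\<forall>i<l. \<forall>j<l. Im ((M ^\<^sub>m Suc k)$$(i,j)) = 0 \<and> 0 \<le> Re ((M ^\<^sub>m Suc k)$$(i,j))"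
  proof (intro allI impI)
    fix i j assume i: "i<l" and j: "j<l"
    have "Im ((M ^\<^sub>m Suc k)$$(i,j)) = (\<Sum>t\<in>{0..<l}. Im (X$$(i,t) * M$$(t,j)))"
      using ent[OF i j] by (simp add: Im_sum)
    also have "\<dots> = 0" using IH1 nn i j by (intro sum.neutral) auto
    finally have 1: "Im ((M ^\<^sub>m Suc k)$$(i,j)) = 0" .
    have "Re ((M ^\<^sub>m Suc k)$$(i,j)) = (\<Sum>t\<in>{0..<l}. Re (X$$(i,t) * M$$(t,j)))"
      using ent[OF i j] by (simp add: Re_sum)
    also have "\<dots> \<ge> 0" using IH1 nn i j by (intro sum_nonneg) auto
    finally show "Im ((M ^\<^sub>m Suc k)$$(i,j)) = 0 \<and> 0 \<le> Re ((M ^\<^sub>m Suc k)$$(i,j))" using 1 by simp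
  qed
  have "Re (M$$(0,0)) ^ k * Re (M$$(0,0)) \<le> Re (X$$(0,0)) * Re (M$$(0,0))"
    using IH2 nn l by (intro mult_right_mono) auto
  also have "\<dots> = Re (X$$(0,0) * M$$(0,0))" using IH1 nn l by simp
  also have "\<dots> \<le> (\<Sum>t\<in>{0..<l}. Re (X$$(0,t) * M$$(t,0)))"
    by (rule member_le_sum) (use IH1 nn l in auto)
  also have "\<dots> = Re ((M ^\<^sub>m Suc k)$$(0,0))"
    using ent[OF l l] by (simp add: Re_sum)
  finally show ?case using P1 by (simp add: mult.commute)
qed


lemma sum_min2: "\<forall>x\<in>set xs. 0 < (x::nat) \<Longrightarrow> sum_list (map (min 2) xs) \<le> 1 \<Longrightarrow> sum_list xs \<le> 1"
proof (induction xs)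
  case (Cons x xs)
  then show ?case by (cases xs) auto
qed simp


locale thm8 =
  fixes A :: "complex mat" and l :: nat and \<epsilon> :: real
  assumes A: "A \<in> carrier_mat l l" and l: "0 < l" and e0: "0 < \<epsilon>" and e1: "\<epsilon> < 1/3"
    and nn: "\<forall>i<l. \<forall>j<l. A $$ (i,j) \<in> \<real> \<and> 0 \<le> Re (A $$ (i,j))"
    and a: "A $$ (0,0) = complex_of_real (1 - \<epsilon>)"
    and tot: "(\<Sum>i<l. \<Sum>j<l. A $$ (i,j)) = 1"
begin

definition "p = (\<Sum>j\<in>{1..<l}. Re (A$$(0,j)))"
definition "q = (\<Sum>i\<in>{1..<l}. Re (A$$(i,0)))"
definition "s = (\<Sum>i\<in>{1..<l}. \<Sum>j\<in>{1..<l}. Re (A$$(i,j)))"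
definition "N v = (\<Sum>i\<in>{1..<l}. cmod (v$i))"

lemma AT: "transpose_mat A \<in> carrier_mat l l" using A by auto

lemma nnT: "\<forall>i<l. \<forall>j<l. transpose_mat A $$ (i,j) \<in> \<real> \<and> 0 \<le> Re (transpose_mat A $$ (i,j))"
  using nn A by auto

lemma pqs_nonneg: "0 \<le> p" "0 \<le> q" "0 \<le> s"
  unfolding p_def q_def s_def using nn l by (auto intro!: sum_nonneg)

lemma N_nonneg: "0 \<le> N v" unfolding N_def by (auto intro!: sum_nonneg)

lemma pqs_sum: "p + q + s = \<epsilon>"
proof -
  have split: "{..<l} = insert 0 {1..<l}" using l by auto
  have "Re (\<Sum>i<l. \<Sum>j<l. A $$ (i,j)) = 1" using tot by simp
  hence "(\<Sum>i<l. \<Sum>j<l. Re (A $$ (i,j))) = 1" by (simp add: Re_sum)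
  hence "Re (A$$(0,0)) + p + (q + s) = 1"
    unfolding p_def q_def s_def split by (simp add: sum.distrib)
  thus ?thesis using a by simp
qed

lemma right_est:
  assumes v: "v \<in> carrier_vec l" and e: "A *\<^sub>v v = lam \<cdot>\<^sub>v v"
  shows "cmod lam * N v \<le> q * cmod (v$0) + s * N v"
    and "cmod (lam - A$$(0,0)) * cmod (v$0) \<le> p * N v"
proof -
  have ev: "\<forall>i<l. (\<Sum>j\<in>{0..<l}. A$$(i,j) * v$j) = lam * v$i"
    using eig_row[OF A v e] by auto
  show "cmod lam * N v \<le> q * cmod (v$0) + s * N v"
    using tail_bound[OF nn ev l] unfolding N_def q_def s_def .
  show "cmod (lam - A$$(0,0)) * cmod (v$0) \<le> p * N v"
    using head_bound[OF nn ev l] unfolding N_def p_def .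
qed

lemma left_est:
  assumes v: "v \<in> carrier_vec l" and e: "transpose_mat A *\<^sub>v v = lam \<cdot>\<^sub>v v"
  shows "cmod lam * N v \<le> p * cmod (v$0) + s * N v"
proof -
  have ev: "\<forall>i<l. (\<Sum>j\<in>{0..<l}. transpose_mat A$$(i,j) * v$j) = lam * v$i"
    using eig_row[OF AT v e] by auto
  have 1: "(\<Sum>i\<in>{1..<l}. Re (transpose_mat A$$(i,0))) = p"
    unfolding p_def using A l by (intro sum.cong) auto
  have 2: "(\<Sum>i\<in>{1..<l}. \<Sum>j\<in>{1..<l}. Re (transpose_mat A$$(i,j))) = s"
    unfolding s_def using A by (subst sum.swap) (intro sum.cong refl, auto)
  show ?thesis
    using tail_bound[OF nnT ev l] unfolding N_def 1 2 .
qed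

lemma zero0:
  assumes v: "v \<in> carrier_vec l" and v0: "v$0 = 0"
    and est: "cmod lam * N v \<le> c * cmod (v$0) + s * N v" and lam: "s < cmod lam"
  shows "v = 0\<^sub>v l"
proof -
  have "(cmod lam - s) * N v \<le> 0" using est v0 by (simp add: algebra_simps)
  hence "N v \<le> 0" using lam by (simp add: mult_le_0_iff)
  hence "N v = 0" using N_nonneg[of v] by simp
  hence "\<forall>i\<in>{1..<l}. cmod (v$i) = 0" unfolding N_def
    by (subst (asm) sum_nonneg_eq_0_iff) auto
  note z = this
  show ?thesis
  proof (rule eq_vecI)
    fix i assume "i < dim_vec (0\<^sub>v l)" hence i: "i < l" by simp
    show "v$i = 0\<^sub>v l $ i"
    proof (cases "i = 0")
      case True thus ?thesis using v0 i by simp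
    next
      case False hence "i \<in> {1..<l}" using i by auto
      thus ?thesis using z i by simp
    qed
  qed (use v in simp)
qed

lemma s_le: "s \<le> \<epsilon>" using pqs_sum pqs_nonneg by linarith

lemma L1:
  assumes ev: "eigenvalue A lam" and big: "\<epsilon> < cmod lam"
  shows "cmod (lam - A$$(0,0)) \<le> \<epsilon>^2 / (1 - 2*\<epsilon>)"
proof -
  from ev obtain v where "eigenvector A v lam" unfolding eigenvalue_def by auto
  hence v: "v \<in> carrier_vec l" and v0: "v \<noteq> 0\<^sub>v l" and e: "A *\<^sub>v v = lam \<cdot>\<^sub>v v"
    unfolding eigenvector_def using A by auto
  note est = right_est[OF v e]
  have slam: "s < cmod lam" using s_le big by linarith
  have "v$0 \<noteq> 0" using zero0[OF v _ est(1) slam] v0 by auto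
  hence x: "0 < cmod (v$0)" by simp
  define d where "d = cmod (lam - A$$(0,0))"
  define L where "L = cmod lam"
  have h1: "(L - s) * N v \<le> q * cmod (v$0)" using est(1) unfolding L_def by (simp add: algebra_simps)
  have h2: "d * cmod (v$0) \<le> p * N v" using est(2) unfolding d_def .
  have "d * (L - s) * cmod (v$0) = (d * cmod (v$0)) * (L - s)" by simp
  also have "\<dots> \<le> (p * N v) * (L - s)" using h2 slam unfolding L_def by (intro mult_right_mono) auto
  also have "\<dots> = p * ((L - s) * N v)" by simp
  also have "\<dots> \<le> p * (q * cmod (v$0))" using h1 pqs_nonneg by (intro mult_left_mono) auto
  finally have "d * (L - s) * cmod (v$0) \<le> (p * q) * cmod (v$0)" by simp
  hence h: "d * (L - s) \<le> p * q" using x by (simp add: mult_le_cancel_right_pos)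
  have "cmod (complex_of_real (1 - \<epsilon>)) = 1 - \<epsilon>" using e1 by (simp only: norm_of_real)
  hence "cmod (A$$(0,0)) = 1 - \<epsilon>" using a by simp
  moreover have "cmod (A$$(0,0)) \<le> cmod lam + cmod (lam - A$$(0,0))"
    by (metis add.commute diff_add_cancel norm_triangle_ineq norm_minus_commute)
  ultimately have L2: "1 - \<epsilon> - d \<le> L" unfolding d_def L_def by linarith
  show ?thesis using ar1[OF pqs_nonneg pqs_sum _ L2 _ h e0 e1] big unfolding d_def L_def by auto
qed


lemma eig_left_exists:
  assumes "eigenvalue A lam" shows "eigenvalue (transpose_mat A) lam"
  using assms eigenvalue_root_char_poly[OF A] eigenvalue_root_char_poly[OF AT] char_poly_transpose_mat[OF A]
  by simp

lemma prod_ne0: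
  assumes v: "v \<in> carrier_vec l" and ev: "A *\<^sub>v v = lam \<cdot>\<^sub>v v" and vne: "v \<noteq> 0\<^sub>v l"
    and u: "u \<in> carrier_vec l" and eu: "transpose_mat A *\<^sub>v u = lam' \<cdot>\<^sub>v u" and une: "u \<noteq> 0\<^sub>v l"
    and big: "\<epsilon> < cmod lam" and big': "\<epsilon> < cmod lam'"
  shows "u \<bullet> v \<noteq> 0"
proof -
  note estv = right_est[OF v ev]
  note estu = left_est[OF u eu]
  have slam: "s < cmod lam" "s < cmod lam'" using s_le big big' by linarith+
  have "v$0 \<noteq> 0" using zero0[OF v _ estv(1) slam(1)] vne by auto
  hence x: "0 < cmod (v$0)" by simp
  have "u$0 \<noteq> 0" using zero0[OF u _ estu slam(2)] une by auto
  hence y: "0 < cmod (u$0)" by simp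
  define L where "L = cmod lam"
  define L' where "L' = cmod lam'"
  have h1: "(L - s) * N v \<le> q * cmod (v$0)" using estv(1) unfolding L_def by (simp add: algebra_simps)
  have h2: "(L' - s) * N u \<le> p * cmod (u$0)" using estu unfolding L'_def by (simp add: algebra_simps)
  have Ls: "0 < L - s" "0 < L' - s" using slam unfolding L_def L'_def by auto
  define P where "P = (L - s) * (L' - s)"
  have Ppos: "0 < P" unfolding P_def using Ls by simp
  have "P * (N u * N v) = ((L' - s) * N u) * ((L - s) * N v)" unfolding P_def by (simp add: algebra_simps)
  also have "\<dots> \<le> (p * cmod (u$0)) * (q * cmod (v$0))"
    by (rule mult_mono[OF h2 h1]) (use Ls N_nonneg[of u] N_nonneg[of v] pqs_nonneg in auto)
  also have "\<dots> = (p * q) * (cmod (u$0) * cmod (v$0))" by (simp add: algebra_simps)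
  finally have A1: "P * (N u * N v) \<le> (p * q) * (cmod (u$0) * cmod (v$0))" .
  have "\<epsilon> - s = p + q" using pqs_sum by simp
  hence pq: "p*q \<le> (\<epsilon>-s)^2/4" using pq4[of p q] by simp
  have es: "0 \<le> \<epsilon> - s" "\<epsilon> - s \<le> L - s" "\<epsilon> - s \<le> L' - s" using s_le big big' unfolding L_def L'_def by auto
  have "(\<epsilon>-s)^2 \<le> P" unfolding P_def power2_eq_square using es by (intro mult_mono) auto
  hence "p * q < P" using pq Ppos by linarith
  hence "(p * q) * (cmod (u$0) * cmod (v$0)) < P * (cmod (u$0) * cmod (v$0))"
    using x y by (intro mult_strict_right_mono) auto
  with A1 have "P * (N u * N v) < P * (cmod (u$0) * cmod (v$0))" by linarith
  hence lt: "N u * N v < cmod (u$0) * cmod (v$0)" using Ppos by (simp add: mult_less_cancel_left_pos)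
  have split: "{0..<l} = insert 0 {1..<l}" using l by auto
  have uv: "u \<bullet> v = u$0 * v$0 + (\<Sum>i\<in>{1..<l}. u$i * v$i)"
    using v unfolding scalar_prod_def by (simp add: split)
  have "cmod (\<Sum>i\<in>{1..<l}. u$i * v$i) \<le> (\<Sum>i\<in>{1..<l}. cmod (u$i) * cmod (v$i))"
    by (rule order.trans[OF norm_sum]) (simp add: norm_mult)
  also have "\<dots> \<le> (\<Sum>i\<in>{1..<l}. cmod (u$i) * N v)"
  proof (rule sum_mono, rule mult_left_mono)
    fix i assume i: "i \<in> {1..<l}"
    show "cmod (v$i) \<le> N v" unfolding N_def by (rule member_le_sum[OF i]) auto
  qed auto
  also have "\<dots> = N u * N v" unfolding N_def by (simp add: sum_distrib_right)
  finally have "cmod (\<Sum>i\<in>{1..<l}. u$i * v$i) < cmod (u$0 * v$0)" using lt by (simp add: norm_mult)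
  thus ?thesis unfolding uv
    by (metis add.commute add_diff_cancel_right' diff_0 norm_minus_cancel order_less_irrefl)
qed

lemma U:
  assumes ev: "eigenvalue A lam" and ev': "eigenvalue A lam'"
    and big: "\<epsilon> < cmod lam" and big': "\<epsilon> < cmod lam'"
  shows "lam = lam'"
proof -
  from ev obtain v where "eigenvector A v lam" unfolding eigenvalue_def by auto
  hence v: "v \<in> carrier_vec l" and vne: "v \<noteq> 0\<^sub>v l" and e: "A *\<^sub>v v = lam \<cdot>\<^sub>v v"
    unfolding eigenvector_def using A by auto
  from eig_left_exists[OF ev'] obtain u where "eigenvector (transpose_mat A) u lam'" unfolding eigenvalue_def by auto
  hence u: "u \<in> carrier_vec l" and une: "u \<noteq> 0\<^sub>v l" and eu: "transpose_mat A *\<^sub>v u = lam' \<cdot>\<^sub>v u"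
    unfolding eigenvector_def using A by auto
  have ne: "u \<bullet> v \<noteq> 0" by (rule prod_ne0[OF v e vne u eu une big big'])
  have "(transpose_mat A *\<^sub>v u) \<bullet> v = u \<bullet> (A *\<^sub>v v)" by (rule transpose_vec_mult_scalar[OF A v u])
  hence "lam' * (u \<bullet> v) = lam * (u \<bullet> v)" unfolding eu e using u v by simp
  thus ?thesis using ne by simp
qed


lemma E: "\<exists>lam. eigenvalue A lam \<and> \<epsilon> < cmod lam"
proof (rule ccontr)
  assume "\<not> ?thesis"
  hence small: "\<And>lam. eigenvalue A lam \<Longrightarrow> cmod lam \<le> \<epsilon>" by force
  define C where "C = (2::complex) \<cdot>\<^sub>m A"
  have C: "C \<in> carrier_mat l l" unfolding C_def using A by auto
  from spectral_radius_mem_max(1)[OF C l] obtain mu where mu: "mu \<in> spectrum C"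
    and sr: "spectral_radius C = cmod mu" by auto
  from mu obtain v where "eigenvector C v mu" unfolding spectrum_def eigenvalue_def by auto
  hence v: "v \<in> carrier_vec l" and vne: "v \<noteq> 0\<^sub>v l" and e: "C *\<^sub>v v = mu \<cdot>\<^sub>v v"
    unfolding eigenvector_def using C by auto
  have "A *\<^sub>v v = (mu/2) \<cdot>\<^sub>v v"
  proof (rule eq_vecI)
    fix i assume "i < dim_vec ((mu/2) \<cdot>\<^sub>v v)" hence i: "i < l" using v by simp
    have "(C *\<^sub>v v) $ i = (mu \<cdot>\<^sub>v v) $ i" using e by simp
    hence "(\<Sum>j\<in>{0..<l}. 2 * A$$(i,j) * v$j) = mu * v$i"
      using i v A unfolding C_def by (simp add: scalar_prod_def)
    hence "2 * (\<Sum>j\<in>{0..<l}. A$$(i,j) * v$j) = mu * v$i"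
      by (simp add: sum_distrib_left mult.assoc)
    thus "(A *\<^sub>v v) $ i = ((mu/2) \<cdot>\<^sub>v v) $ i" using i v A by (simp add: scalar_prod_def field_simps)
  qed (use v A in simp)
  hence "eigenvalue A (mu/2)" unfolding eigenvalue_def eigenvector_def using v vne A by auto
  hence "cmod (mu/2) \<le> \<epsilon>" by (rule small)
  hence "spectral_radius C < 1" unfolding sr using e1 by (simp add: norm_divide)
  from spectral_radius_jnf_norm_bound_less_1_upper_triangular[OF C this]
  obtain c where bnd: "\<And>k. norm_bound (C ^\<^sub>m k) c" by auto
  have nnC: "\<forall>i<l. \<forall>j<l. Im (C$$(i,j)) = 0 \<and> 0 \<le> Re (C$$(i,j))"
    using nn A unfolding C_def by (auto simp: complex_is_Real_iff)
  have C00: "Re (C$$(0,0)) = 2 * (1 - \<epsilon>)" using a A l unfolding C_def by simp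
  have "1 < 2 * (1 - \<epsilon>)" using e1 by simp
  from real_arch_pow[OF this] obtain k where k: "c < (2 * (1 - \<epsilon>)) ^ k" by auto
  have "(2 * (1 - \<epsilon>)) ^ k \<le> Re ((C ^\<^sub>m k)$$(0,0))"
    using pow_nonneg[OF C nnC l, of k] C00 by simp
  also have "\<dots> \<le> cmod ((C ^\<^sub>m k)$$(0,0))" by (rule complex_Re_le_cmod)
  also have "\<dots> \<le> c" using bnd[of k] C l unfolding norm_bound_def by auto
  finally show False using k by simp
qed


lemma charT: "transpose_mat (char_matrix A mu) = char_matrix (transpose_mat A) mu"
  using A unfolding char_matrix_def by (intro eq_matI) auto

lemma cm_eig: assumes w: "w \<in> carrier_vec l" and c: "char_matrix A mu *\<^sub>v w = 0\<^sub>v l"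
  shows "A *\<^sub>v w = mu \<cdot>\<^sub>v w"
proof (cases "w = 0\<^sub>v l")
  case True thus ?thesis using A by auto
next
  case False
  hence "eigenvector A w mu" using eigenvector_char_matrix[OF A] w c by auto
  thus ?thesis unfolding eigenvector_def by auto
qed

lemma ker_sub:
  assumes ev: "eigenvalue A mu" and big: "\<epsilon> < cmod mu"
  obtains v where "v \<in> mat_kernel (char_matrix A mu ^\<^sub>m 2)" "v \<noteq> 0\<^sub>v l"
    "\<And>x. x \<in> mat_kernel (char_matrix A mu ^\<^sub>m 2) \<Longrightarrow> \<exists>c. x = c \<cdot>\<^sub>v v"
proof -
  define Cm where "Cm = char_matrix A mu"
  have Cm: "Cm \<in> carrier_mat l l" unfolding Cm_def using A by auto
  have C2: "Cm ^\<^sub>m 2 \<in> carrier_mat l l" using Cm by auto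
  have pow2: "Cm ^\<^sub>m 2 *\<^sub>v x = Cm *\<^sub>v (Cm *\<^sub>v x)" if "x \<in> carrier_vec l" for x
  proof -
    have "Cm ^\<^sub>m 2 = 1\<^sub>m l * Cm * Cm" using Cm by (simp add: numeral_2_eq_2)
    also have "\<dots> = Cm * Cm" using Cm by simp
    finally show ?thesis using Cm that by simp
  qed
  from ev obtain v where "eigenvector A v mu" unfolding eigenvalue_def by auto
  hence v: "v \<in> carrier_vec l" and vne: "v \<noteq> 0\<^sub>v l" and e: "A *\<^sub>v v = mu \<cdot>\<^sub>v v"
    and cv: "Cm *\<^sub>v v = 0\<^sub>v l"
    unfolding Cm_def using eigenvector_char_matrix[OF A] by (auto simp: eigenvector_def)
  from eig_left_exists[OF ev] obtain u where "eigenvector (transpose_mat A) u mu" unfolding eigenvalue_def by auto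
  hence u: "u \<in> carrier_vec l" and une: "u \<noteq> 0\<^sub>v l" and eu: "transpose_mat A *\<^sub>v u = mu \<cdot>\<^sub>v u"
    and cu: "transpose_mat Cm *\<^sub>v u = 0\<^sub>v l"
    unfolding Cm_def charT using eigenvector_char_matrix[OF AT] by (auto simp: eigenvector_def)
  have slam: "s < cmod mu" using s_le big by linarith
  have v0: "v$0 \<noteq> 0" using zero0[OF v _ right_est(1)[OF v e] slam] vne by auto
  show ?thesis
  proof (rule that[of v])
    show "v \<in> mat_kernel (char_matrix A mu ^\<^sub>m 2)" unfolding Cm_def[symmetric]
      by (rule mat_kernelI[OF C2 v]) (simp add: pow2[OF v] cv, intro eq_vecI, use Cm in \<open>auto simp: scalar_prod_def\<close>)
    show "v \<noteq> 0\<^sub>v l" by fact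
    fix x assume "x \<in> mat_kernel (char_matrix A mu ^\<^sub>m 2)"
    hence x: "x \<in> carrier_vec l" and kx: "Cm ^\<^sub>m 2 *\<^sub>v x = 0\<^sub>v l"
      using mat_kernelD[OF C2] unfolding Cm_def by auto
    define y where "y = Cm *\<^sub>v x"
    have y: "y \<in> carrier_vec l" unfolding y_def using Cm x by auto
    have cy: "Cm *\<^sub>v y = 0\<^sub>v l" using kx pow2[OF x] unfolding y_def by simp
    have "y = 0\<^sub>v l"
    proof (rule ccontr)
      assume yne: "y \<noteq> 0\<^sub>v l"
      have ey: "A *\<^sub>v y = mu \<cdot>\<^sub>v y" using cm_eig[OF y] cy unfolding Cm_def by auto
      have "u \<bullet> y \<noteq> 0" by (rule prod_ne0[OF y ey yne u eu une big big])
      moreover have "u \<bullet> y = (transpose_mat Cm *\<^sub>v u) \<bullet> x"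
        unfolding y_def by (rule transpose_vec_mult_scalar[OF Cm x u, symmetric])
      ultimately show False using cu x by simp
    qed
    hence ex: "A *\<^sub>v x = mu \<cdot>\<^sub>v x" using cm_eig[OF x] unfolding y_def Cm_def by auto
    define w where "w = (v$0) \<cdot>\<^sub>v x - (x$0) \<cdot>\<^sub>v v"
    have w: "w \<in> carrier_vec l" unfolding w_def using x v by auto
    have ew: "A *\<^sub>v w = mu \<cdot>\<^sub>v w"
      unfolding w_def using A x v ex e
      by (simp add: mult_minus_distrib_mat_vec mult_mat_vec) (intro eq_vecI, auto simp: algebra_simps)
    have w0: "w$0 = 0" unfolding w_def using x v l by simp
    have "w = 0\<^sub>v l" using zero0[OF w w0 right_est(1)[OF w ew] slam] .
    hence wz: "v$0 * x$i - x$0 * v$i = 0" if "i < l" for i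
    proof -
      have "w $ i = 0\<^sub>v l $ i" using \<open>w = 0\<^sub>v l\<close> by simp
      thus ?thesis unfolding w_def using x v that by simp
    qed
    have "x = (x$0 / v$0) \<cdot>\<^sub>v v"
    proof (rule eq_vecI)
      fix i assume "i < dim_vec ((x$0 / v$0) \<cdot>\<^sub>v v)" hence i: "i < l" using v by simp
      show "x $ i = ((x$0 / v$0) \<cdot>\<^sub>v v) $ i" using wz[OF i] v0 i v by (simp add: field_simps)
    qed (use x v in simp)
    thus "\<exists>c. x = c \<cdot>\<^sub>v v" by blast
  qed
qed


lemma order1:
  assumes ev: "eigenvalue A mu" and big: "\<epsilon> < cmod mu"
  shows "order mu (char_poly A) = 1"
proof -
  obtain v where vk: "v \<in> mat_kernel (char_matrix A mu ^\<^sub>m 2)" and vne: "v \<noteq> 0\<^sub>v l"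
    and all: "\<And>x. x \<in> mat_kernel (char_matrix A mu ^\<^sub>m 2) \<Longrightarrow> \<exists>c. x = c \<cdot>\<^sub>v v"
    using ker_sub[OF ev big] by blast
  define K where "K = char_matrix A mu ^\<^sub>m 2"
  have K: "K \<in> carrier_mat l l" unfolding K_def using A by auto
  interpret KK: kernel l l K by unfold_locales (rule K)
  have span: "KK.span {v} = mat_kernel K"
  proof
    show "KK.span {v} \<subseteq> mat_kernel K"
      using KK.Ker.span_is_subset2[of "{v}"] vk unfolding K_def by auto
    show "mat_kernel K \<subseteq> KK.span {v}"
    proof
      fix x assume "x \<in> mat_kernel K"
      then obtain c where x: "x = c \<cdot>\<^sub>v v" using all unfolding K_def by blast
      have vs: "v \<in> KK.span {v}" using KK.Ker.in_own_span[of "{v}"] vk unfolding K_def by auto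
      have sub: "submodule class_ring (KK.span {v}) KK.VK"
        by (rule KK.Ker.span_is_submodule) (use vk K_def in auto)
      show "x \<in> KK.span {v}" unfolding x using submodule.smult_closed[OF sub, of c v] vs by simp
    qed
  qed
  have "KK.dim \<le> 1" by (rule KK.Ker.dim_le1I[OF span]) (use vk K_def in auto)
  hence kd: "kernel_dim K \<le> 1" by simp
  obtain n_as where jnf: "jordan_nf A n_as"
    using char_poly_factorized[OF A] jordan_nf_exists[OF A] by blast
  have "dim_gen_eigenspace A mu 2 \<le> 1" using kd unfolding dim_gen_eigenspace_def K_def .
  hence le: "(\<Sum> n \<leftarrow> map fst [(n, e)\<leftarrow>n_as . e = mu]. min 2 n) \<le> 1"
    unfolding dim_gen_eigenspace[OF jnf] .
  have eqf: "[(n, e)\<leftarrow>n_as . e = mu] = filter (\<lambda> na. snd na = mu) n_as"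
    by (induction n_as) auto
  have pos: "\<forall>x\<in>set (map fst (filter (\<lambda> na. snd na = mu) n_as)). 0 < x"
    using jnf unfolding jordan_nf_def by force
  have "order mu (char_poly A) \<le> 1"
    unfolding jordan_nf_order[OF jnf]
    by (rule sum_min2[OF pos]) (use le eqf in simp)
  moreover have "order mu (char_poly A) \<noteq> 0"
  proof -
    have "poly (char_poly A) mu = 0" using ev eigenvalue_root_char_poly[OF A] by simp
    moreover have "char_poly A \<noteq> 0" using degree_monic_char_poly[OF A] by auto
    ultimately show ?thesis using order_root by blast
  qed
  ultimately show ?thesis by linarith
qed


lemma far:
  assumes "cmod (x - A$$(0,0)) \<le> \<epsilon>^2 / (1 - 2*\<epsilon>)"
  shows "\<epsilon> < cmod x"
proof -
  have pos: "0 < 1 - 2*\<epsilon>" using e1 by simp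
  have "\<epsilon>^2 < (1 - 2*\<epsilon>)^2" using e0 e1 by (intro power_strict_mono) auto
  hence "\<epsilon>^2 / (1 - 2*\<epsilon>) < 1 - 2*\<epsilon>" using pos by (simp add: field_simps power2_eq_square)
  have "cmod (complex_of_real (1 - \<epsilon>)) = 1 - \<epsilon>" using e1 by (simp only: norm_of_real)
  hence c: "cmod (A$$(0,0)) = 1 - \<epsilon>" using a by simp
  have "cmod (A$$(0,0)) \<le> cmod x + cmod (x - A$$(0,0))"
    by (metis add.commute diff_add_cancel norm_triangle_ineq norm_minus_commute)
  thus ?thesis using c assms \<open>\<epsilon>^2 / (1 - 2*\<epsilon>) < 1 - 2*\<epsilon>\<close> by linarith
qed

end

theorem theorem8:
  fixes A :: "complex mat" and l :: nat and \<epsilon> :: real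
  assumes "A \<in> carrier_mat l l"
    and "0 < l"
    and "0 < \<epsilon>" and "\<epsilon> < 1/3"
    and "\<forall>i<l. \<forall>j<l. A $$ (i,j) \<in> \<real> \<and> 0 \<le> Re (A $$ (i,j))"
    and "A $$ (0,0) = complex_of_real (1 - \<epsilon>)"
    and "(\<Sum>i<l. \<Sum>j<l. A $$ (i,j)) = 1"
  shows "\<exists>\<mu>. eigenvalue A \<mu> \<and> order \<mu> (char_poly A) = 1
          \<and> cmod (\<mu> - A $$ (0,0)) \<le> \<epsilon>\<^sup>2 / (1 - 2*\<epsilon>)
          \<and> (\<forall>x. eigenvalue A x \<and> cmod (x - A $$ (0,0)) \<le> \<epsilon>\<^sup>2 / (1 - 2*\<epsilon>) \<longrightarrow> x = \<mu>)
          \<and> (\<forall>x. eigenvalue A x \<and> x \<noteq> \<mu> \<longrightarrow> cmod x \<le> \<epsilon>)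
          \<and> (\<forall>x. eigenvalue A x \<and> x \<noteq> \<mu> \<longrightarrow> cmod x < cmod \<mu>)"
proof -
  interpret thm8 A l \<epsilon> by unfold_locales (use assms in auto)
  obtain mu where ev: "eigenvalue A mu" and big: "\<epsilon> < cmod mu" using E by blast
  show ?thesis
  proof (intro exI[of _ mu] conjI allI impI)
    show "eigenvalue A mu" by fact
    show "order mu (char_poly A) = 1" by (rule order1[OF ev big])
    show "cmod (mu - A $$ (0,0)) \<le> \<epsilon>\<^sup>2 / (1 - 2*\<epsilon>)" by (rule L1[OF ev big])
    fix x
    {
      assume "eigenvalue A x \<and> cmod (x - A $$ (0,0)) \<le> \<epsilon>\<^sup>2 / (1 - 2*\<epsilon>)"
      thus "x = mu" using U[OF _ ev _ big] far by blast
    }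
    {
      assume h: "eigenvalue A x \<and> x \<noteq> mu"
      show "cmod x \<le> \<epsilon>"
      proof (rule ccontr)
        assume "\<not> cmod x \<le> \<epsilon>"
        hence "x = mu" using U[OF _ ev _ big] h by auto
        thus False using h by simp
      qed
      thus "cmod x < cmod mu" using big by linarith
    }
  qed
qed

end
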